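(* Let $d\ge4$ and let $u:I\times\mathbb{R}^d\to\mathbb{C}$ be a critical spherically symmetric maximal-lifespan solution of $(i\partial_t+\Delta)u=|u|^pu$ which satisfies $u\in L^\infty_t\dot H^{s_c}_x(I\times\mathbb{R}^d)$ and $N(t)\le1$ for all $t\in I$. Then for each $\theta>0$, $$\lim_{N\to\infty}\Big(\||\nabla|^{s_c}u_{\ge N}\|_{L^\infty_tL^2_x(I\times\mathbb{R}^d)}+\frac1{N^\theta}\||\nabla|^{\theta+s_c}u_{<N}\|_{L^\infty_tL^2_x(I\times\mathbb{R}^d)}\Big)=0.$$
   Context: Here $p>0$, $s_c:=\frac d2-\frac2p\in(0,\frac12)$; $u_{\ge N}=P_{\ge N}u$, $u_{<N}=P_{<N}u$ are Littlewood–Paley projections (multipliers $1-\varphi(\xi/N)$ and $\varphi(\xi/N)$, with $\varphi$ a radial bump supported in $|\xi|\le\frac{11}{10}$ and equal to $1$ on $|\xi|\le1$). For $A>0$, $\mathcal{SC}(A)$ means: every radial $u_0\in\dot H^{s_c}$ whose maximal-lifespan solution $u$ with $u(0)=u_0$ has $\sup_{t}\|u(t)\|_{\dot H^{s_c}}\le A$ is global with finite scattering size $S_{\mathbb{R}}(u)=\iint|u|^{\frac{(d+2)p}{2}}$. If $\mathcal{SC}(A)$ fails for some $A$, there is a critical value $A_c$ with $\mathcal{SC}(A)$ holding for $A<A_c$ and failing for $A>A_c$; a critical solution is a spherically symmetric maximal-lifespan solution with $\sup_t\|u(t)\|_{\dot H^{s_c}}\le A_c$ which is not global with finite scattering size.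 Such a solution is almost periodic modulo scaling: there are $N:I\to(0,\infty)$ and $C:(0,\infty)\to(0,\infty)$ such that for every $\eta>0$ and $t\in I$, $\int_{|x|\ge C(\eta)/N(t)}||\nabla|^{s_c}u(t,x)|^2dx+\int_{|\xi|\ge C(\eta)N(t)}|\xi|^{2s_c}|\hat u(t,\xi)|^2d\xi<\eta$. *)

theory Defs
  imports "HOL-Analysis.Analysis"
begin

definition dderiv :: "('a::real_normed_vector \<Rightarrow> 'b::real_normed_vector) \<Rightarrow> 'a \<Rightarrow> 'a \<Rightarrow> 'b" where
  "dderiv f v = (\<lambda>x. frechet_derivative f (at x) v)"

fun iter_dderiv :: "'a list \<Rightarrow> ('a::real_normed_vector \<Rightarrow> 'b::real_normed_vector) \<Rightarrow> 'a \<Rightarrow> 'b" where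
  "iter_dderiv [] f = f"
| "iter_dderiv (v # vs) f = dderiv (iter_dderiv vs f) v"

definition smooth_fun :: "('a::euclidean_space \<Rightarrow> 'b::real_normed_vector) \<Rightarrow> bool" where
  "smooth_fun f \<longleftrightarrow> (\<forall>vs x. iter_dderiv vs f differentiable (at x))"

definition tsupport :: "('a::real_normed_vector \<Rightarrow> 'b::zero) \<Rightarrow> 'a set" where
  "tsupport f = closure {x. f x \<noteq> 0}"

definition test_fun :: "('a::euclidean_space \<Rightarrow> 'b::real_normed_vector) \<Rightarrow> 'a set \<Rightarrow> bool" where
  "test_fun f S \<longleftrightarrow> smooth_fun f \<and> compact (tsupport f) \<and> tsupport f \<subseteq> S"

definition fourier :: "(real^'n \<Rightarrow> complex) \<Rightarrow> real^'n \<Rightarrow> complex" where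
  "fourier f \<xi> = (\<integral>x. cis (- 2 * pi * (x \<bullet> \<xi>)) * f x \<partial>lborel)"

text \<open>g is the (distributional) Fourier transform of f, tested against C_c-infinity functions:
  the pairing of f with the Fourier transform of a test function equals the pairing of g with it.\<close>
definition ft_rel :: "(real^'n \<Rightarrow> complex) \<Rightarrow> (real^'n \<Rightarrow> complex) \<Rightarrow> bool" where
  "ft_rel f g \<longleftrightarrow> f \<in> borel_measurable lborel \<and> g \<in> borel_measurable lborel \<and>
     (\<forall>\<psi>. test_fun \<psi> UNIV \<longrightarrow>
        integrable lborel (\<lambda>x. f x * fourier \<psi> x) \<and>
        integrable lborel (\<lambda>\<xi>. g \<xi> * \<psi> \<xi>) \<and>
        (\<integral>x. f x * fourier \<psi> x \<partial>lborel) = (\<integral>\<xi>. g \<xi> * \<psi> \<xi> \<partial>lborel))"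

definition fhat :: "(real^'n \<Rightarrow> complex) \<Rightarrow> real^'n \<Rightarrow> complex" where
  "fhat f = (SOME g. ft_rel f g)"

definition hs_mem :: "real \<Rightarrow> (real^'n \<Rightarrow> complex) \<Rightarrow> bool" where
  "hs_mem s f \<longleftrightarrow> (\<exists>g. ft_rel f g \<and>
      integrable lborel (\<lambda>\<xi>. norm \<xi> powr (2 * s) * (cmod (g \<xi>))\<^sup>2))"

text \<open>L2 norm of |nabla|^s applied to the Fourier multiplier m (Plancherel).\<close>
definition mult_norm :: "real \<Rightarrow> (real^'n \<Rightarrow> real) \<Rightarrow> (real^'n \<Rightarrow> complex) \<Rightarrow> real" where
  "mult_norm s m f = sqrt (\<integral>\<xi>. norm \<xi> powr (2 * s) * (m \<xi>)\<^sup>2 * (cmod (fhat f \<xi>))\<^sup>2 \<partial>lborel)"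

definition hs_norm :: "real \<Rightarrow> (real^'n \<Rightarrow> complex) \<Rightarrow> real" where
  "hs_norm s f = mult_norm s (\<lambda>_. 1) f"

text \<open>|nabla|^s f as an L2 function on physical space.\<close>
definition frac_grad :: "real \<Rightarrow> (real^'n \<Rightarrow> complex) \<Rightarrow> real^'n \<Rightarrow> complex" where
  "frac_grad s f = (SOME g. integrable lborel (\<lambda>x. (cmod (g x))\<^sup>2) \<and>
                       ft_rel g (\<lambda>\<xi>. complex_of_real (norm \<xi> powr s) * fhat f \<xi>))"

definition radial :: "(real^'n \<Rightarrow> 'b) \<Rightarrow> bool" where
  "radial f \<longleftrightarrow> (\<forall>x y. norm x = norm y \<longrightarrow> f x = f y)"

definition crit_reg :: "'n::finite itself \<Rightarrow> real \<Rightarrow> real" where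
  "crit_reg _ p = real CARD('n) / 2 - 2 / p"

definition laplacian :: "(real \<times> (real^'n) \<Rightarrow> complex) \<Rightarrow> real \<times> (real^'n) \<Rightarrow> complex" where
  "laplacian \<psi> = (\<lambda>z. \<Sum>i\<in>Basis. dderiv (dderiv \<psi> (0, i)) (0, i) z)"

definition spacetime :: "(real \<Rightarrow> real^'n \<Rightarrow> complex) \<Rightarrow> real \<times> (real^'n) \<Rightarrow> complex" where
  "spacetime u = (\<lambda>z. u (fst z) (snd z))"

definition scat_size :: "real \<Rightarrow> real set \<Rightarrow> (real \<Rightarrow> real^'n \<Rightarrow> complex) \<Rightarrow> ennreal" where
  "scat_size p I u = (\<integral>\<^sup>+ z. indicator (I \<times> UNIV) z *
       ennreal (cmod (spacetime u z) powr ((real CARD('n) + 2) * p / 2)) \<partial>lborel)"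

text \<open>Solution on a nonempty interval I: u in C_t Hdot^{s_c} and in the scattering space on
  compact subintervals, solving the equation in the sense of distributions.\<close>
definition nls_sol :: "real \<Rightarrow> real set \<Rightarrow> (real \<Rightarrow> real^'n \<Rightarrow> complex) \<Rightarrow> bool" where
  "nls_sol p I u \<longleftrightarrow> is_interval I \<and> I \<noteq> {} \<and>
     (\<forall>t\<in>I. hs_mem (crit_reg TYPE('n) p) (u t)) \<and>
     (\<forall>t\<in>I. ((\<lambda>s. hs_norm (crit_reg TYPE('n) p) (\<lambda>x. u s x - u t x)) \<longlongrightarrow> 0) (at t within I)) \<and>
     spacetime u \<in> borel_measurable lborel \<and>
     (\<forall>K. compact K \<and> K \<subseteq> I \<longrightarrow> scat_size p K u < \<infinity>) \<and>
     (\<forall>\<psi>. test_fun \<psi> (interior I \<times> UNIV) \<longrightarrow>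
        integrable lborel (\<lambda>z. spacetime u z * (- \<i> * dderiv \<psi> (1, 0) z + laplacian \<psi> z)) \<and>
        integrable lborel (\<lambda>z. complex_of_real (cmod (spacetime u z) powr p) * spacetime u z * \<psi> z) \<and>
        (\<integral>z. spacetime u z * (- \<i> * dderiv \<psi> (1, 0) z + laplacian \<psi> z) \<partial>lborel) =
        (\<integral>z. complex_of_real (cmod (spacetime u z) powr p) * spacetime u z * \<psi> z \<partial>lborel))"

definition max_sol :: "real \<Rightarrow> real set \<Rightarrow> (real \<Rightarrow> real^'n \<Rightarrow> complex) \<Rightarrow> bool" where
  "max_sol p I u \<longleftrightarrow> nls_sol p I u \<and>
     \<not> (\<exists>J v. I \<subset> J \<and> nls_sol p J v \<and> (\<forall>t\<in>I. AE x in lborel. v t x = u t x))"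

definition SC :: "'n::finite itself \<Rightarrow> real \<Rightarrow> real \<Rightarrow> bool" where
  "SC _ p A \<longleftrightarrow> (\<forall>I (u :: real \<Rightarrow> real^'n \<Rightarrow> complex).
      max_sol p I u \<and> 0 \<in> I \<and> radial (u 0) \<and>
      (\<forall>t\<in>I. hs_norm (crit_reg TYPE('n) p) (u t) \<le> A)
      \<longrightarrow> I = UNIV \<and> scat_size p UNIV u < \<infinity>)"

text \<open>Critical solution: A_c is the critical value (SC(A) for A < A_c, fails for A > A_c).\<close>
definition critical_sol :: "real \<Rightarrow> real set \<Rightarrow> (real \<Rightarrow> real^'n \<Rightarrow> complex) \<Rightarrow> bool" where
  "critical_sol p I u \<longleftrightarrow> (\<exists>Ac.
      (\<forall>A. 0 < A \<and> A < Ac \<longrightarrow> SC TYPE('n) p A) \<and> (\<forall>A. A > Ac \<longrightarrow> \<not> SC TYPE('n) p A) \<and>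
      max_sol p I u \<and> (\<forall>t\<in>I. radial (u t)) \<and>
      (\<forall>t\<in>I. hs_norm (crit_reg TYPE('n) p) (u t) \<le> Ac) \<and>
      \<not> (I = UNIV \<and> scat_size p UNIV u < \<infinity>))"

text \<open>Almost periodicity modulo scaling with frequency scale function N and compactness modulus C.\<close>
definition almost_periodic :: "real \<Rightarrow> real set \<Rightarrow> (real \<Rightarrow> real^'n \<Rightarrow> complex) \<Rightarrow>
    (real \<Rightarrow> real) \<Rightarrow> (real \<Rightarrow> real) \<Rightarrow> bool" where
  "almost_periodic s I u N C \<longleftrightarrow> (\<forall>t\<in>I. N t > 0) \<and> (\<forall>\<eta>>0. C \<eta> > 0) \<and>
     (\<forall>\<eta>>0. \<forall>t\<in>I.
        (LINT x:{x. norm x \<ge> C \<eta> / N t}|lborel. (cmod (frac_grad s (u t) x))\<^sup>2) +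
        (LINT \<xi>:{\<xi>. norm \<xi> \<ge> C \<eta> * N t}|lborel. norm \<xi> powr (2 * s) * (cmod (fhat (u t) \<xi>))\<^sup>2) < \<eta>)"

end

theory Submission
  imports Defs "HOL-Computational_Algebra.Polynomial"
begin

lemma Int_box:
  fixes a :: "'a::euclidean_space"
  shows "box a b \<inter> box c d =
    box (\<Sum>i\<in>Basis. max (a\<bullet>i) (c\<bullet>i) *\<^sub>R i) (\<Sum>i\<in>Basis. min (b\<bullet>i) (d\<bullet>i) *\<^sub>R i)"
  unfolding set_eq_iff and Int_iff and mem_box
  by auto

lemma box_zero_ae:
  fixes w :: "'a::euclidean_space \<Rightarrow> complex"
  assumes wm: "w \<in> borel_measurable lborel"
    and wi: "\<And>a b. integrable lborel (\<lambda>x. indicator (box a b) x *\<^sub>R w x)"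
    and w0: "\<And>a b. (\<integral>x. indicator (box a b) x *\<^sub>R w x \<partial>lborel) = 0"
  shows "AE x in lborel. w x = 0"
proof -
  have "AE x in lborel. indicator (box (- real R *\<^sub>R One) (real R *\<^sub>R One)) x *\<^sub>R w x = 0" for R :: nat
  proof -
    define K where "K = box (- real R *\<^sub>R One) (real R *\<^sub>R One :: 'a)"
    define wK where "wK = (\<lambda>x. indicator K x *\<^sub>R w x)"
    have wKi: "integrable lborel wK" unfolding wK_def K_def by (rule wi)
    define G where "G = range (\<lambda>(a, b). box a b :: 'a set)"
    have sG: "sets lborel = sigma_sets UNIV G"
      unfolding G_def sets_lborel by (subst borel_eq_box) (simp add: sets_measure_of)
    have IS: "Int_stable G" unfolding G_def Int_stable_def
      by (auto simp: Int_box)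
    have P: "(LINT x:A|lborel. wK x) = 0" if A: "A \<in> sigma_sets UNIV G" for A
    proof (rule sigma_sets_induct_disjoint[OF IS _ A])
      show "G \<subseteq> Pow UNIV" by simp
    next
      fix A assume "A \<in> G"
      then obtain a b where Ab: "A = box a b" unfolding G_def by auto
      obtain c d where cd: "A \<inter> K = box c d" unfolding Ab K_def Int_box by blast
      have "(LINT x:A|lborel. wK x) = (\<integral>x. indicator (box c d) x *\<^sub>R w x \<partial>lborel)"
        unfolding set_lebesgue_integral_def wK_def cd[symmetric]
        by (intro Bochner_Integration.integral_cong) (auto simp: indicator_def)
      then show "(LINT x:A|lborel. wK x) = 0" using w0 by simp
    next
      show "(LINT x:{}|lborel. wK x) = 0" by (simp add: set_lebesgue_integral_def)
    next
      fix A assume c1: "A \<in> sigma_sets UNIV G" and c2: "(LINT x:A|lborel. wK x) = 0"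
      have Am: "A \<in> sets lborel" using c1 sG by simp
      have "(LINT x:(UNIV - A)|lborel. wK x) = (\<integral>x. wK x \<partial>lborel) - (LINT x:A|lborel. wK x)"
        unfolding set_lebesgue_integral_def
        apply (subst Bochner_Integration.integral_diff[symmetric])
          apply (rule wKi)
         apply (rule integrable_mult_indicator[OF Am wKi])
        apply (intro Bochner_Integration.integral_cong)
         apply (auto simp: indicator_def)
        done
      also have "(\<integral>x. wK x \<partial>lborel) = 0" unfolding wK_def K_def by (rule w0)
      finally show "(LINT x:(UNIV - A)|lborel. wK x) = 0" using c2 by simp
    next
      fix A :: "nat \<Rightarrow> 'a set"
      assume u1: "disjoint_family A" and u2: "range A \<subseteq> sigma_sets UNIV G"
        and u3: "\<And>i. (LINT x:(A i)|lborel. wK x) = 0"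
      have Am: "A i \<in> sets lborel" for i using u2 sG by auto
      have "(LINT x:(\<Union>i. A i)|lborel. wK x) = (\<Sum>i. (LINT x:(A i)|lborel. wK x))"
        apply (rule lebesgue_integral_countable_add[OF Am])
        using u1 apply (simp add: disjoint_family_on_def)
        unfolding set_integrable_def
        apply (rule integrable_mult_indicator[OF _ wKi])
        using Am by auto
      then show "(LINT x:(\<Union>i. A i)|lborel. wK x) = 0" using u3 by simp
    qed
    have "AE x in lborel. wK x = 0"
      apply (rule sigma_finite_measure.density_zero[OF sigma_finite_lborel wKi])
      apply (rule P) using sG by simp
    then show ?thesis unfolding wK_def K_def by simp
  qed
  then have "AE x in lborel. \<forall>R::nat. indicator (box (- real R *\<^sub>R One) (real R *\<^sub>R One)) x *\<^sub>R w x = 0"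
    by (subst AE_all_countable) blast
  then show ?thesis
  proof (rule AE_mp, intro AE_I2 impI)
    fix x :: 'a
    assume H: "\<forall>R::nat. indicator (box (- real R *\<^sub>R One) (real R *\<^sub>R One)) x *\<^sub>R w x = 0"
    obtain R :: nat where R: "norm x < real R" using reals_Archimedean2 by blast
    have "x \<in> box (- real R *\<^sub>R One) (real R *\<^sub>R One)"
      unfolding mem_box
    proof (intro ballI conjI)
      fix i :: 'a assume i: "i \<in> Basis"
      have "\<bar>x \<bullet> i\<bar> \<le> norm x" using Basis_le_norm[OF i] .
      then show "(- real R *\<^sub>R One) \<bullet> i < x \<bullet> i" "x \<bullet> i < (real R *\<^sub>R One) \<bullet> i"
        using R i by auto
    qed
    then show "w x = 0" using H[rule_format, of R] by simp
  qed
qed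

definition E :: "real poly \<Rightarrow> real \<Rightarrow> real" where
  "E Q s = (if s > 0 then poly Q (1 / s) * exp (- (1 / s)) else 0)"

definition Ed :: "real poly \<Rightarrow> real poly" where
  "Ed Q = [:0, 0, 1:] * (Q - pderiv Q)"

lemma poly_exp_lim: "((\<lambda>y::real. y ^ k * poly Q y / exp y) \<longlongrightarrow> 0) at_top"
proof (induction Q arbitrary: k)
  case 0
  show ?case by (simp add: tendsto_const)
next
  case (pCons a Q)
  have "((\<lambda>y. a * (y ^ k / exp y) + y ^ Suc k * poly Q y / exp y) \<longlongrightarrow> a * 0 + 0) at_top"
    by (intro tendsto_intros tendsto_power_div_exp_0 pCons)
  then show ?case by (simp add: algebra_simps add_divide_distrib)
qed

lemma E_deriv: "(E Q has_real_derivative E (Ed Q) s) (at s)"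
proof (cases "s > 0")
  case True
  have d: "((\<lambda>s. poly Q (1 / s) * exp (- (1 / s))) has_real_derivative
      (poly (pderiv Q) (1 / s) * (- 1 / s ^ 2) * exp (- (1 / s)) + poly Q (1 / s) * (exp (- (1 / s)) * (1 / s ^ 2)))) (at s)"
    using True
    by (auto intro!: derivative_eq_intros simp: power2_eq_square field_simps)
  have eq: "poly (pderiv Q) (1 / s) * (- 1 / s ^ 2) * exp (- (1 / s)) + poly Q (1 / s) * (exp (- (1 / s)) * (1 / s ^ 2))
      = E (Ed Q) s"
    using True unfolding E_def Ed_def by (simp add: algebra_simps power2_eq_square divide_simps)
  show ?thesis
    apply (rule has_field_derivative_transform_within_open[where S = "{0<..}"])
    using d eq True by (auto simp: E_def)
next
  case False
  show ?thesis
  proof (cases "s < 0")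
    case True
    have z: "E (Ed Q) s = 0" using True by (simp add: E_def)
    have "((\<lambda>_. 0) has_real_derivative 0) (at s)" by simp
    then show ?thesis unfolding z
      apply (rule has_field_derivative_transform_within_open[where S = "{..<0}"])
      using True by (auto simp: E_def)
  next
    case False
    with \<open>\<not> s > 0\<close> have s0: "s = 0" by simp
    have "((\<lambda>y. (E Q y - E Q 0) / (y - 0)) \<longlongrightarrow> 0) (at 0)"
      unfolding filterlim_at_split
    proof
      show "((\<lambda>y. (E Q y - E Q 0) / (y - 0)) \<longlongrightarrow> 0) (at_left 0)"
        apply (rule tendsto_eventually)
        by (auto simp: E_def eventually_at_left_field intro!: exI[of _ "-1"])
      have "((\<lambda>y. y ^ 1 * poly Q y / exp y) \<longlongrightarrow> 0) at_top" by (rule poly_exp_lim)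
      then have "LIM x at_top. (E Q (inverse x) - E Q 0) / (inverse x - 0) :> nhds 0"
        apply (rule filterlim_cong[THEN iffD1, rotated 3])
          apply simp_all
        apply (rule eventually_at_top_linorder[THEN iffD2])
        apply (rule exI[of _ 1])
        by (auto simp: E_def exp_minus field_simps)
      then show "((\<lambda>y. (E Q y - E Q 0) / (y - 0)) \<longlongrightarrow> 0) (at_right 0)"
        unfolding filterlim_at_right_to_top .
    qed
    then show ?thesis unfolding s0 has_field_derivative_iff by (simp add: E_def)
  qed
qed

inductive_set SA :: "(real^'n \<Rightarrow> complex) set" where
  gen: "(\<lambda>x. complex_of_real (E Q (\<alpha> * (x $ i) + \<beta>))) \<in> SA"
| const: "(\<lambda>x. c) \<in> SA"
| add: "f \<in> SA \<Longrightarrow> g \<in> SA \<Longrightarrow> (\<lambda>x. f x + g x) \<in> SA"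
| mult: "f \<in> SA \<Longrightarrow> g \<in> SA \<Longrightarrow> (\<lambda>x. f x * g x) \<in> SA"

lemma E_smult: "E (smult a Q) s = a * E Q s"
  by (simp add: E_def)

lemma SA_deriv:
  assumes "f \<in> SA"
  shows "\<exists>f'. (\<forall>x. (f has_derivative f' x) (at x)) \<and> (\<forall>v. (\<lambda>x. f' x v) \<in> SA)"
  using assms
proof induction
  case (gen Q \<alpha> i \<beta>)
  let ?f' = "\<lambda>x v. complex_of_real (E (smult \<alpha> (Ed Q)) (\<alpha> * (x $ i) + \<beta>)) * complex_of_real (v $ i)"
  have "((\<lambda>x. complex_of_real (E Q (\<alpha> * (x $ i) + \<beta>))) has_derivative ?f' x) (at x)" for x
  proof -
    have i: "((\<lambda>x. \<alpha> * (x $ i) + \<beta>) has_derivative (\<lambda>v. \<alpha> * (v $ i))) (at x)"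
      by (auto intro!: derivative_eq_intros bounded_linear_imp_has_derivative)
    have "((\<lambda>x. E Q (\<alpha> * (x $ i) + \<beta>)) has_derivative (\<lambda>v. E (Ed Q) (\<alpha> * (x $ i) + \<beta>) * (\<alpha> * (v $ i)))) (at x)"
      using has_derivative_compose[OF i has_field_derivative_imp_has_derivative[OF E_deriv]] .
    from has_derivative_of_real[OF this] show ?thesis
      by (simp add: E_smult algebra_simps)
  qed
  moreover have "(\<lambda>x. ?f' x v) \<in> SA" for v
    by (intro SA.mult SA.gen SA.const)
  ultimately show ?case by (intro exI[of _ ?f']) blast
next
  case (const c)
  show ?case by (rule exI[of _ "\<lambda>x v. 0"]) (auto intro: SA.const)
next
  case (add f g)
  then obtain f' g' where f: "\<forall>x. (f has_derivative f' x) (at x)" "\<forall>v. (\<lambda>x. f' x v) \<in> SA"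
    and g: "\<forall>x. (g has_derivative g' x) (at x)" "\<forall>v. (\<lambda>x. g' x v) \<in> SA" by blast
  show ?case
    apply (rule exI[of _ "\<lambda>x v. f' x v + g' x v"])
    using f g by (auto intro!: has_derivative_add SA.add)
next
  case (mult f g)
  then obtain f' g' where f: "\<forall>x. (f has_derivative f' x) (at x)" "\<forall>v. (\<lambda>x. f' x v) \<in> SA"
    and g: "\<forall>x. (g has_derivative g' x) (at x)" "\<forall>v. (\<lambda>x. g' x v) \<in> SA" by blast
  show ?case
    apply (rule exI[of _ "\<lambda>x v. f x * g' x v + f' x v * g x"])
    using f g mult.hyps by (auto intro!: has_derivative_mult SA.add SA.mult)
qed

lemma SA_dderiv: "f \<in> SA \<Longrightarrow> dderiv f v \<in> SA"
proof -
  assume "f \<in> SA"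
  from SA_deriv[OF this] obtain f' where f': "\<forall>x. (f has_derivative f' x) (at x)" "\<forall>v. (\<lambda>x. f' x v) \<in> SA"
    by blast
  have "dderiv f v = (\<lambda>x. f' x v)"
    unfolding dderiv_def using frechet_derivative_at f'(1) by metis
  then show ?thesis using f'(2) by simp
qed

lemma SA_differentiable: "f \<in> SA \<Longrightarrow> f differentiable (at x)"
  using SA_deriv unfolding differentiable_def by blast

lemma SA_iter: "f \<in> SA \<Longrightarrow> iter_dderiv vs f \<in> SA"
  by (induction vs) (auto intro: SA_dderiv)

lemma SA_smooth: "f \<in> SA \<Longrightarrow> smooth_fun f"
  unfolding smooth_fun_def using SA_iter SA_differentiable by blast

lemma SA_prod: "finite S \<Longrightarrow> (\<And>i. i \<in> S \<Longrightarrow> f i \<in> SA) \<Longrightarrow> (\<lambda>x. \<Prod>i\<in>S. f i x) \<in> SA"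
proof (induction S rule: finite_induct)
  case empty
  then show ?case by (simp add: SA.const)
next
  case (insert a S)
  then show ?case by (simp add: SA.mult)
qed

definition bump :: "real \<Rightarrow> real^'n \<Rightarrow> real^'n \<Rightarrow> real^'n \<Rightarrow> complex" where
  "bump k a b = (\<lambda>x. \<Prod>i\<in>UNIV. complex_of_real (E 1 (k * x$i + (- k * a$i))) * complex_of_real (E 1 ((-k) * x$i + k * b$i)))"

lemma E1_pos: "s > 0 \<Longrightarrow> E 1 s = exp (- (1 / s))"
  by (simp add: E_def)
lemma E1_ge0: "0 \<le> E 1 s"
  by (simp add: E_def)
lemma E1_le1: "E 1 s \<le> 1"
  by (simp add: E_def)
lemma E1_nonpos: "s \<le> 0 \<Longrightarrow> E 1 s = 0"
  by (simp add: E_def)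

lemma bump_SA: "bump k a b \<in> SA"
  unfolding bump_def by (intro SA_prod SA.mult SA.gen) auto

lemma bump_zero:
  assumes k: "k > 0" and x: "x \<notin> box a b"
  shows "bump k a b x = 0"
proof -
  from x obtain i where i: "x$i \<le> a$i \<or> b$i \<le> x$i" unfolding mem_box_cart not_all de_Morgan_conj not_less by blast
  have "complex_of_real (E 1 (k * x$i + (- k * a$i))) * complex_of_real (E 1 ((-k) * x$i + k * b$i)) = 0"
  proof (cases "x$i \<le> a$i")
    case True
    then have "k * x$i + (- k * a$i) \<le> 0" using k
      by (simp add: mult_left_mono)
    then show ?thesis by (simp add: E1_nonpos)
  next
    case False
    then have "b$i \<le> x$i" using i by simp
    then have "(-k) * x$i + k * b$i \<le> 0" using k
      by (simp add: mult_left_mono)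
    then show ?thesis by (simp add: E1_nonpos)
  qed
  then show ?thesis unfolding bump_def
    by (intro prod_zero) auto
qed

lemma bump_norm_le: "norm (bump k a b x) \<le> 1"
proof -
  have "norm (bump k a b x) = (\<Prod>i\<in>UNIV. norm (complex_of_real (E 1 (k * x$i + (- k * a$i))) * complex_of_real (E 1 ((-k) * x$i + k * b$i))))"
    unfolding bump_def by (rule prod_norm[symmetric])
  also have "\<dots> \<le> 1"
  proof (rule prod_le_1)
    fix i
    have "norm (complex_of_real (E 1 (k * x$i + (- k * a$i))) * complex_of_real (E 1 ((-k) * x$i + k * b$i)))
        = E 1 (k * x$i + (- k * a$i)) * E 1 ((-k) * x$i + k * b$i)"
      using E1_ge0 by (simp add: norm_mult)
    moreover have "E 1 (k * x$i + (- k * a$i)) * E 1 ((-k) * x$i + k * b$i) \<le> 1"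
      by (rule mult_le_one) (auto simp: E1_ge0 E1_le1)
    ultimately show "0 \<le> norm (complex_of_real (E 1 (k * x$i + (- k * a$i))) * complex_of_real (E 1 ((-k) * x$i + k * b$i))) \<and>
      norm (complex_of_real (E 1 (k * x$i + (- k * a$i))) * complex_of_real (E 1 ((-k) * x$i + k * b$i))) \<le> 1"
      by (simp add: E1_ge0)
  qed
  finally show ?thesis .
qed

lemma bump_test: "k > 0 \<Longrightarrow> test_fun (bump k a b) UNIV"
proof -
  assume k: "k > 0"
  have sub: "tsupport (bump k a b) \<subseteq> cbox a b"
    unfolding tsupport_def
    apply (rule closure_minimal)
    using bump_zero[OF k, of _ a b] box_subset_cbox[of a b] apply blast
    by (rule closed_cbox)
  have "compact (tsupport (bump k a b))"
  proof -
    have "compact (cbox a b \<inter> tsupport (bump k a b))"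
      by (rule compact_Int_closed) (auto simp: tsupport_def closed_cbox)
    then show ?thesis using sub by (simp add: Int_absorb1)
  qed
  then show ?thesis unfolding test_fun_def using SA_smooth[OF bump_SA] by simp
qed

lemma E1_lim: "c > 0 \<Longrightarrow> (\<lambda>n. E 1 (real (Suc n) * c)) \<longlonglongrightarrow> 1"
proof -
  assume c: "c > 0"
  have "(\<lambda>n. exp (- ((1 / c) * inverse (real (Suc n))))) \<longlonglongrightarrow> exp (- ((1/c) * 0))"
    by (intro tendsto_intros LIMSEQ_inverse_real_of_nat)
  moreover have "E 1 (real (Suc n) * c) = exp (- ((1 / c) * inverse (real (Suc n))))" for n
  proof -
    have pos: "real (Suc n) * c > 0" using c by simp
    show ?thesis unfolding E1_pos[OF pos] by (simp add: field_simps)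
  qed
  ultimately show ?thesis by simp
qed

lemma bump_lim:
  fixes x :: "real^'n"
  assumes x: "x \<in> box a b"
  shows "(\<lambda>n. bump (real (Suc n)) a b x) \<longlonglongrightarrow> 1"
proof -
  have "(\<lambda>n. \<Prod>i\<in>UNIV. complex_of_real (E 1 (real (Suc n) * (x$i - a$i))) * complex_of_real (E 1 (real (Suc n) * (b$i - x$i))))
      \<longlonglongrightarrow> (\<Prod>i\<in>(UNIV::'n set). complex_of_real 1 * complex_of_real 1)"
    apply (rule tendsto_prod[where f = "\<lambda>i n. complex_of_real (E 1 (real (Suc n) * (x$i - a$i))) * complex_of_real (E 1 (real (Suc n) * (b$i - x$i)))"])
    apply (intro tendsto_mult tendsto_of_real E1_lim)
    using x unfolding mem_box_cart by auto
  then show ?thesis unfolding bump_def by (simp add: algebra_simps)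
qed

lemma bump_lower:
  assumes x: "x \<in> cbox a b"
  shows "exp (-2) ^ CARD('n) \<le> norm (bump 1 (\<chi> i. a$i - 1) (\<chi> i. b$i + 1) (x :: real^'n))"
proof -
  have f: "exp (-2) \<le> E 1 (x$i + (- (a$i - 1))) * E 1 (- x$i + (b$i + 1))" for i
  proof -
    have s1: "x$i + (- (a$i - 1)) \<ge> 1" "- x$i + (b$i + 1) \<ge> 1" using x unfolding mem_box_cart by auto
    have "exp (-1) \<le> E 1 s" if "s \<ge> 1" for s
      using that by (simp add: E1_pos divide_le_eq_1)
    then have "exp (-1) * exp (-1) \<le> E 1 (x$i + (- (a$i - 1))) * E 1 (- x$i + (b$i + 1))"
      using s1 by (intro mult_mono) (auto simp: E1_ge0)
    then show ?thesis by (simp add: mult_exp_exp)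
  qed
  have "exp (-2) ^ CARD('n) = (\<Prod>i\<in>(UNIV::'n set). exp (-2))" by simp
  also have "\<dots> \<le> (\<Prod>i\<in>UNIV. E 1 (x$i + (- (a$i - 1))) * E 1 (- x$i + (b$i + 1)))"
    by (rule prod_mono) (use f in auto)
  also have "\<dots> = (\<Prod>i\<in>UNIV. norm (complex_of_real (E 1 (1 * x$i + (- 1 * (\<chi> i. a$i - 1)$i))) * complex_of_real (E 1 ((-1) * x$i + 1 * (\<chi> i. b$i + 1)$i))))"
    using E1_ge0 by (simp add: norm_mult)
  also have "\<dots> = norm (bump 1 (\<chi> i. a$i - 1) (\<chi> i. b$i + 1) x)"
    unfolding bump_def by (rule prod_norm)
  finally show ?thesis .
qed

lemma ft_rel_unique:
  fixes f g g' :: "real^'n \<Rightarrow> complex"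
  assumes g: "ft_rel f g" and g': "ft_rel f g'"
  shows "AE \<xi> in lborel. g \<xi> = g' \<xi>"
proof -
  define w where "w = (\<lambda>\<xi>. g \<xi> - g' \<xi>)"
  have wm: "w \<in> borel_measurable lborel" using g g' unfolding ft_rel_def w_def by auto
  have wt: "integrable lborel (\<lambda>x. w x * \<psi> x) \<and> (\<integral>x. w x * \<psi> x \<partial>lborel) = 0"
    if "test_fun \<psi> UNIV" for \<psi>
  proof -
    have i1: "integrable lborel (\<lambda>x. g x * \<psi> x)" and i2: "integrable lborel (\<lambda>x. g' x * \<psi> x)"
      and e: "(\<integral>x. g x * \<psi> x \<partial>lborel) = (\<integral>x. g' x * \<psi> x \<partial>lborel)"
      using g g' that unfolding ft_rel_def by metis+
    have "(\<lambda>x. w x * \<psi> x) = (\<lambda>x. g x * \<psi> x - g' x * \<psi> x)" unfolding w_def by (simp add: algebra_simps)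
    then show ?thesis using i1 i2 e by simp
  qed
  have cint: "integrable lborel (\<lambda>x. indicator (cbox a b) x *\<^sub>R w x)" for a b :: "real^'n"
  proof -
    define \<psi> where "\<psi> = bump 1 (\<chi> i. a$i - 1) (\<chi> i. b$i + 1)"
    define c :: real where "c = exp (-2) ^ CARD('n)"
    have c: "c > 0" unfolding c_def by simp
    have i: "integrable lborel (\<lambda>x. w x * \<psi> x)" using wt[OF bump_test[of 1]] unfolding \<psi>_def by simp
    show ?thesis
    proof (rule Bochner_Integration.integrable_bound[OF integrable_mult_right[OF i, of "complex_of_real (1/c)"]])
      show "(\<lambda>x. indicator (cbox a b) x *\<^sub>R w x) \<in> borel_measurable lborel" using wm by simp
      show "AE x in lborel. norm (indicator (cbox a b) x *\<^sub>R w x) \<le> norm (complex_of_real (1/c) * (w x * \<psi> x))"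
      proof (rule AE_I2)
        fix x
        show "norm (indicator (cbox a b) x *\<^sub>R w x) \<le> norm (complex_of_real (1/c) * (w x * \<psi> x))"
        proof (cases "x \<in> cbox a b")
          case True
          have "c \<le> norm (\<psi> x)" using bump_lower[OF True] unfolding \<psi>_def c_def .
          then have "1 \<le> norm (\<psi> x) / c" using c by simp
          then have "norm (w x) * 1 \<le> norm (w x) * (norm (\<psi> x) / c)" by (intro mult_left_mono) auto
          then show ?thesis using True c by (simp add: norm_mult norm_divide)
        qed simp
      qed
    qed
  qed
  show ?thesis
  proof -
    have "AE x in lborel. w x = 0"
    proof (rule box_zero_ae[OF wm])
      fix a b :: "real^'n"
      show bi: "integrable lborel (\<lambda>x. indicator (box a b) x *\<^sub>R w x)"
        apply (rule Bochner_Integration.integrable_bound[OF cint[of a b]])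
        using wm box_subset_cbox[of a b] by (auto simp: indicator_def)
      let ?s = "\<lambda>n x. w x * bump (real (Suc n)) a b x"
      have "(\<lambda>n. \<integral>x. ?s n x \<partial>lborel) \<longlonglongrightarrow> (\<integral>x. indicator (box a b) x *\<^sub>R w x \<partial>lborel)"
      proof (rule integral_dominated_convergence[where w = "\<lambda>x. norm (indicator (cbox a b) x *\<^sub>R w x)"])
        show "(\<lambda>x. indicator (box a b) x *\<^sub>R w x) \<in> borel_measurable lborel" using wm by simp
        show "?s n \<in> borel_measurable lborel" for n
          using wt[OF bump_test[of "real (Suc n)" a b]] by (intro borel_measurable_integrable) simp
        show "integrable lborel (\<lambda>x. norm (indicator (cbox a b) x *\<^sub>R w x))"
          using cint by (rule integrable_norm)
        show "AE x in lborel. (\<lambda>n. ?s n x) \<longlonglongrightarrow> indicator (box a b) x *\<^sub>R w x"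
        proof (rule AE_I2)
          fix x
          show "(\<lambda>n. ?s n x) \<longlonglongrightarrow> indicator (box a b) x *\<^sub>R w x"
          proof (cases "x \<in> box a b")
            case True
            then show ?thesis using tendsto_mult[OF tendsto_const bump_lim[OF True], of "w x"] by simp
          next
            case False
            then show ?thesis using bump_zero[OF _ False] by simp
          qed
        qed
        show "AE x in lborel. norm (?s n x) \<le> norm (indicator (cbox a b) x *\<^sub>R w x)" for n
        proof (rule AE_I2)
          fix x
          show "norm (?s n x) \<le> norm (indicator (cbox a b) x *\<^sub>R w x)"
          proof (cases "x \<in> box a b")
            case True
            then have "x \<in> cbox a b" using box_subset_cbox by blast
            then show ?thesis using bump_norm_le[of "real (Suc n)" a b x]
              by (simp add: norm_mult mult_left_le)
          next
            case False
            then show ?thesis using bump_zero[OF _ False] by simp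
          qed
        qed
      qed
      moreover have "(\<integral>x. ?s n x \<partial>lborel) = 0" for n
        using wt[OF bump_test[of "real (Suc n)" a b]] by simp
      ultimately have "(\<lambda>n. 0::complex) \<longlonglongrightarrow> (\<integral>x. indicator (box a b) x *\<^sub>R w x \<partial>lborel)"
        by simp
      then show "(\<integral>x. indicator (box a b) x *\<^sub>R w x \<partial>lborel) = 0"
        by (simp add: LIMSEQ_const_iff)
    qed
    then show ?thesis unfolding w_def by simp
  qed
qed

lemma T_sets: "{\<xi>::real^'n. a \<le> norm \<xi>} \<in> sets lborel"
  by measurable

lemma est1:
  fixes w F :: "real^'n \<Rightarrow> real" and \<phi> :: "real^'n \<Rightarrow> real"
  assumes hi: "integrable lborel (\<lambda>\<xi>. w \<xi> * F \<xi>)"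
    and w0: "\<And>\<xi>. 0 \<le> w \<xi>" and F0: "\<And>\<xi>. 0 \<le> F \<xi>"
    and K: "\<And>\<xi>. \<bar>\<phi> \<xi>\<bar> \<le> K"
    and one: "\<And>\<xi>. norm \<xi> \<le> 1 \<Longrightarrow> \<phi> \<xi> = 1"
    and a: "0 < a" "a \<le> M"
    and tail: "(LINT \<xi>:{\<xi>. a \<le> norm \<xi>}|lborel. w \<xi> * F \<xi>) < \<eta>"
  shows "(\<integral>\<xi>. w \<xi> * (1 - \<phi> ((1 / M) *\<^sub>R \<xi>))\<^sup>2 * F \<xi> \<partial>lborel) \<le> (1 + K)\<^sup>2 * \<eta>"
proof -
  define T where "T = {\<xi>::real^'n. a \<le> norm \<xi>}"
  have Ti: "integrable lborel (\<lambda>\<xi>. indicator T \<xi> * (w \<xi> * F \<xi>))"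
    using integrable_mult_indicator[OF T_sets hi] unfolding T_def by simp
  have "(\<integral>\<xi>. w \<xi> * (1 - \<phi> ((1 / M) *\<^sub>R \<xi>))\<^sup>2 * F \<xi> \<partial>lborel)
      \<le> (\<integral>\<xi>. (1 + K)\<^sup>2 * (indicator T \<xi> * (w \<xi> * F \<xi>)) \<partial>lborel)"
  proof (rule integral_mono')
    show "integrable lborel (\<lambda>\<xi>. (1 + K)\<^sup>2 * (indicator T \<xi> * (w \<xi> * F \<xi>)))"
      using Ti by simp
    fix \<xi> :: "real^'n"
    have wF: "0 \<le> w \<xi> * F \<xi>" using w0 F0 by simp
    show "0 \<le> (1 + K)\<^sup>2 * (indicator T \<xi> * (w \<xi> * F \<xi>))"
      using wF by simp
    show "w \<xi> * (1 - \<phi> ((1 / M) *\<^sub>R \<xi>))\<^sup>2 * F \<xi> \<le> (1 + K)\<^sup>2 * (indicator T \<xi> * (w \<xi> * F \<xi>))"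
    proof (cases "\<xi> \<in> T")
      case True
      have "\<bar>1 - \<phi> ((1 / M) *\<^sub>R \<xi>)\<bar> \<le> 1 + K"
        using K[of "(1 / M) *\<^sub>R \<xi>"] by linarith
      then have "(1 - \<phi> ((1 / M) *\<^sub>R \<xi>))\<^sup>2 \<le> (1 + K)\<^sup>2"
        by (metis abs_le_square_iff abs_of_nonneg abs_ge_zero order_trans)
      then have "(1 - \<phi> ((1 / M) *\<^sub>R \<xi>))\<^sup>2 * (w \<xi> * F \<xi>) \<le> (1 + K)\<^sup>2 * (w \<xi> * F \<xi>)"
        using wF by (rule mult_right_mono)
      then show ?thesis using True by (simp add: algebra_simps)
    next
      case False
      then have "norm \<xi> < a" unfolding T_def by simp
      then have "norm ((1 / M) *\<^sub>R \<xi>) \<le> 1" using a by (simp add: field_simps)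
      then have "\<phi> ((1 / M) *\<^sub>R \<xi>) = 1" by (rule one)
      then show ?thesis using False by simp
    qed
  qed
  also have "\<dots> = (1 + K)\<^sup>2 * (LINT \<xi>:T|lborel. w \<xi> * F \<xi>)"
    unfolding set_lebesgue_integral_def by simp
  also have "\<dots> \<le> (1 + K)\<^sup>2 * \<eta>"
    using tail unfolding T_def by (intro mult_left_mono) auto
  finally show ?thesis .
qed

lemma est2:
  fixes F :: "real^'n \<Rightarrow> real" and \<phi> :: "real^'n \<Rightarrow> real"
  assumes hi: "integrable lborel (\<lambda>\<xi>. norm \<xi> powr (2 * s) * F \<xi>)"
    and F0: "\<And>\<xi>. 0 \<le> F \<xi>"
    and K: "\<And>\<xi>. \<bar>\<phi> \<xi>\<bar> \<le> K"
    and supp: "\<And>\<xi>. norm \<xi> > 11/10 \<Longrightarrow> \<phi> \<xi> = 0"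
    and a: "0 < a" "a \<le> c" and M: "0 < M" and \<theta>: "0 < \<theta>"
    and tail: "(LINT \<xi>:{\<xi>. a \<le> norm \<xi>}|lborel. norm \<xi> powr (2 * s) * F \<xi>) < \<eta>"
    and tot: "(\<integral>\<xi>. norm \<xi> powr (2 * s) * F \<xi> \<partial>lborel) \<le> B2"
  shows "(1 / M powr \<theta>)\<^sup>2 * (\<integral>\<xi>. norm \<xi> powr (2 * (\<theta> + s)) * (\<phi> ((1 / M) *\<^sub>R \<xi>))\<^sup>2 * F \<xi> \<partial>lborel)
     \<le> K\<^sup>2 * ((c / M) powr (2 * \<theta>) * B2 + (11/10) powr (2 * \<theta>) * \<eta>)"
proof -
  define T where "T = {\<xi>::real^'n. a \<le> norm \<xi>}"
  define h where "h = (\<lambda>\<xi>::real^'n. norm \<xi> powr (2 * s) * F \<xi>)"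
  have h0: "0 \<le> h \<xi>" for \<xi> unfolding h_def using F0 by simp
  have Ti: "integrable lborel (\<lambda>\<xi>. indicator T \<xi> * h \<xi>)"
    using integrable_mult_indicator[OF T_sets hi] unfolding T_def h_def by simp
  have K0: "0 \<le> K" using K[of 0] by simp
  have eq: "(1 / M powr \<theta>)\<^sup>2 * (norm \<xi> powr (2 * (\<theta> + s)) * (\<phi> ((1 / M) *\<^sub>R \<xi>))\<^sup>2 * F \<xi>)
      = (norm \<xi> / M) powr (2 * \<theta>) * (\<phi> ((1 / M) *\<^sub>R \<xi>))\<^sup>2 * h \<xi>" for \<xi> :: "real^'n"
  proof -
    have "(1 / M powr \<theta>)\<^sup>2 = 1 / M powr (2 * \<theta>)"
      using M by (simp add: power2_eq_square powr_add[symmetric])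
    moreover have "norm \<xi> powr (2 * (\<theta> + s)) = norm \<xi> powr (2 * \<theta>) * norm \<xi> powr (2 * s)"
      by (simp add: powr_add[symmetric] algebra_simps)
    ultimately show ?thesis unfolding h_def powr_divide by (simp add: field_simps)
  qed
  have "(1 / M powr \<theta>)\<^sup>2 * (\<integral>\<xi>. norm \<xi> powr (2 * (\<theta> + s)) * (\<phi> ((1 / M) *\<^sub>R \<xi>))\<^sup>2 * F \<xi> \<partial>lborel)
      = (\<integral>\<xi>. (norm \<xi> / M) powr (2 * \<theta>) * (\<phi> ((1 / M) *\<^sub>R \<xi>))\<^sup>2 * h \<xi> \<partial>lborel)"
    by (simp only: eq integral_mult_right_zero[symmetric])
  also have "\<dots> \<le> (\<integral>\<xi>. K\<^sup>2 * ((c / M) powr (2 * \<theta>) * h \<xi> + (11/10) powr (2 * \<theta>) * (indicator T \<xi> * h \<xi>)) \<partial>lborel)"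
  proof (rule integral_mono')
    show "integrable lborel (\<lambda>\<xi>. K\<^sup>2 * ((c / M) powr (2 * \<theta>) * h \<xi> + (11/10) powr (2 * \<theta>) * (indicator T \<xi> * h \<xi>)))"
      using Ti hi unfolding h_def by simp
    fix \<xi> :: "real^'n"
    have i0: "0 \<le> indicator T \<xi> * h \<xi>" using h0[of \<xi>] by simp
    show "0 \<le> K\<^sup>2 * ((c / M) powr (2 * \<theta>) * h \<xi> + (11/10) powr (2 * \<theta>) * (indicator T \<xi> * h \<xi>))"
      using h0[of \<xi>] i0 by simp
    have P: "(\<phi> ((1 / M) *\<^sub>R \<xi>))\<^sup>2 \<le> K\<^sup>2"
    proof -
      have "\<bar>\<phi> ((1 / M) *\<^sub>R \<xi>)\<bar>\<^sup>2 \<le> K\<^sup>2"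
        by (rule power_mono) (simp_all add: K)
      then show ?thesis by simp
    qed
    show "(norm \<xi> / M) powr (2 * \<theta>) * (\<phi> ((1 / M) *\<^sub>R \<xi>))\<^sup>2 * h \<xi>
        \<le> K\<^sup>2 * ((c / M) powr (2 * \<theta>) * h \<xi> + (11/10) powr (2 * \<theta>) * (indicator T \<xi> * h \<xi>))"
    proof (cases "\<xi> \<in> T")
      case False
      then have "norm \<xi> < a" unfolding T_def by simp
      then have "norm \<xi> / M \<le> c / M" using a M by (simp add: divide_right_mono)
      then have r: "(norm \<xi> / M) powr (2 * \<theta>) \<le> (c / M) powr (2 * \<theta>)"
        using \<theta> M by (intro powr_mono2) auto
      have "(norm \<xi> / M) powr (2 * \<theta>) * (\<phi> ((1 / M) *\<^sub>R \<xi>))\<^sup>2 * h \<xi> \<le> (c / M) powr (2 * \<theta>) * K\<^sup>2 * h \<xi>"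
        by (intro mult_right_mono mult_mono r P h0) auto
      then show ?thesis using False by (simp add: algebra_simps)
    next
      case True
      show ?thesis
      proof (cases "norm ((1 / M) *\<^sub>R \<xi>) > 11/10")
        case True
        then show ?thesis using supp[OF True] h0[of \<xi>] i0 by simp
      next
        case False
        then have "norm \<xi> / M \<le> 11/10" using M by (simp add: field_simps)
        then have r: "(norm \<xi> / M) powr (2 * \<theta>) \<le> (11/10) powr (2 * \<theta>)"
          using \<theta> M by (intro powr_mono2) auto
        have "(norm \<xi> / M) powr (2 * \<theta>) * (\<phi> ((1 / M) *\<^sub>R \<xi>))\<^sup>2 * h \<xi> \<le> (11/10) powr (2 * \<theta>) * K\<^sup>2 * h \<xi>"
          by (intro mult_right_mono mult_mono r P h0) auto
        moreover have "0 \<le> K\<^sup>2 * ((c / M) powr (2 * \<theta>) * h \<xi>)" using h0[of \<xi>] by simp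
        ultimately show ?thesis using \<open>\<xi> \<in> T\<close> by (simp add: algebra_simps)
      qed
    qed
  qed
  also have "\<dots> = K\<^sup>2 * ((c / M) powr (2 * \<theta>) * (\<integral>\<xi>. h \<xi> \<partial>lborel) + (11/10) powr (2 * \<theta>) * (LINT \<xi>:T|lborel. h \<xi>))"
    using Ti hi unfolding set_lebesgue_integral_def h_def by simp
  also have "\<dots> \<le> K\<^sup>2 * ((c / M) powr (2 * \<theta>) * B2 + (11/10) powr (2 * \<theta>) * \<eta>)"
    using tail tot unfolding T_def h_def
    by (intro mult_left_mono add_mono) auto
  finally show ?thesis .
qed

lemma hs_mem_integrable:
  fixes f :: "real^'n \<Rightarrow> complex"
  assumes "hs_mem s f"
  shows "integrable lborel (\<lambda>\<xi>. norm \<xi> powr (2 * s) * (cmod (fhat f \<xi>))\<^sup>2)"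
proof -
  obtain g where g: "ft_rel f g" and gi: "integrable lborel (\<lambda>\<xi>. norm \<xi> powr (2 * s) * (cmod (g \<xi>))\<^sup>2)"
    using assms unfolding hs_mem_def by blast
  have fh: "ft_rel f (fhat f)" unfolding fhat_def using g by (rule someI[where P="ft_rel f"])
  then have [measurable]: "fhat f \<in> borel_measurable lborel" unfolding ft_rel_def by simp
  have ae: "AE \<xi> in lborel. g \<xi> = fhat f \<xi>" by (rule ft_rel_unique[OF g fh])
  show ?thesis
    apply (rule integrable_cong_AE_imp[OF gi])
     apply measurable
    using ae by (rule AE_mp) (intro AE_I2, simp)
qed

lemma sup_bound:
  fixes f :: "'a \<Rightarrow> real"
  assumes "I \<noteq> {}" "\<And>t. t \<in> I \<Longrightarrow> 0 \<le> f t \<and> f t \<le> X"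
  shows "0 \<le> (SUP t\<in>I. f t) \<and> (SUP t\<in>I. f t) \<le> X"
proof
  have bdd: "bdd_above (f ` I)" using assms(2) by (auto intro!: bdd_aboveI)
  obtain t0 where t0: "t0 \<in> I" using assms(1) by blast
  have "f t0 \<le> (SUP t\<in>I. f t)" by (rule cSUP_upper[OF t0 bdd])
  then show "0 \<le> (SUP t\<in>I. f t)" using assms(2)[OF t0] by linarith
  show "(SUP t\<in>I. f t) \<le> X" using assms by (intro cSUP_least) auto
qed

theorem lemma4p1:
  fixes p :: real and I :: "real set" and u :: "real \<Rightarrow> real^'n \<Rightarrow> complex"
    and N :: "real \<Rightarrow> real" and C :: "real \<Rightarrow> real" and \<phi> :: "real^'n \<Rightarrow> real"
  assumes d4: "CARD('n) \<ge> 4"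
    and p_pos: "p > 0"
    and sc_range: "0 < crit_reg TYPE('n) p" "crit_reg TYPE('n) p < 1/2"
    and \<phi>_smooth: "smooth_fun \<phi>" and \<phi>_radial: "radial \<phi>"
    and \<phi>_supp: "\<And>\<xi>. norm \<xi> > 11/10 \<Longrightarrow> \<phi> \<xi> = 0"
    and \<phi>_one: "\<And>\<xi>. norm \<xi> \<le> 1 \<Longrightarrow> \<phi> \<xi> = 1"
    and crit: "critical_sol p I u"
    and bdd: "\<exists>B. \<forall>t\<in>I. hs_norm (crit_reg TYPE('n) p) (u t) \<le> B"
    and ap: "almost_periodic (crit_reg TYPE('n) p) I u N C"
    and N_le: "\<And>t. t \<in> I \<Longrightarrow> N t \<le> 1"
  shows "\<forall>\<theta>>0. ((\<lambda>M. (SUP t\<in>I. mult_norm (crit_reg TYPE('n) p) (\<lambda>\<xi>. 1 - \<phi> ((1 / M) *\<^sub>R \<xi>)) (u t))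
              + (1 / M powr \<theta>) *
                (SUP t\<in>I. mult_norm (\<theta> + crit_reg TYPE('n) p) (\<lambda>\<xi>. \<phi> ((1 / M) *\<^sub>R \<xi>)) (u t)))
            \<longlongrightarrow> 0) at_top"
proof (intro allI impI)
  fix \<theta> :: real
  assume \<theta>: "\<theta> > 0"
  define s where "s = crit_reg TYPE('n) p"
  from crit have ms: "max_sol p I u" unfolding critical_sol_def by blast
  then have nls: "nls_sol p I u" unfolding max_sol_def by blast
  then have Ine: "I \<noteq> {}" and hsm: "\<And>t. t \<in> I \<Longrightarrow> hs_mem s (u t)"
    unfolding nls_sol_def s_def by auto
  from bdd obtain B where B: "\<And>t. t \<in> I \<Longrightarrow> hs_norm s (u t) \<le> B" unfolding s_def by blast
  define h where "h = (\<lambda>t \<xi>. norm \<xi> powr (2 * s) * (cmod (fhat (u t) \<xi>))\<^sup>2)"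
  have hi: "integrable lborel (h t)" if "t \<in> I" for t
    unfolding h_def by (rule hs_mem_integrable[OF hsm[OF that]])
  have h0: "0 \<le> h t \<xi>" for t \<xi> unfolding h_def by simp
  have tot: "(\<integral>\<xi>. h t \<xi> \<partial>lborel) \<le> B\<^sup>2" if t: "t \<in> I" for t
  proof -
    have e: "hs_norm s (u t) = sqrt (\<integral>\<xi>. h t \<xi> \<partial>lborel)"
      unfolding hs_norm_def mult_norm_def h_def by simp
    have "0 \<le> (\<integral>\<xi>. h t \<xi> \<partial>lborel)" by (rule Bochner_Integration.integral_nonneg) (simp add: h0)
    moreover have "sqrt (\<integral>\<xi>. h t \<xi> \<partial>lborel) \<le> B" using B[OF t] e by simp
    ultimately show ?thesis
    proof -
      assume y0: "0 \<le> (\<integral>\<xi>. h t \<xi> \<partial>lborel)" and yB: "sqrt (\<integral>\<xi>. h t \<xi> \<partial>lborel) \<le> B"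
      have "(sqrt (\<integral>\<xi>. h t \<xi> \<partial>lborel))\<^sup>2 \<le> B\<^sup>2" by (rule power_mono[OF yB]) (simp add: y0)
      then show ?thesis using y0 by simp
    qed
  qed
  have B0: "0 \<le> B"
  proof -
    obtain t where "t \<in> I" using Ine by blast
    moreover have "0 \<le> hs_norm s (u t)" unfolding hs_norm_def mult_norm_def by simp
    ultimately show ?thesis using B[of t] by linarith
  qed
  have Cpos: "\<And>\<eta>. \<eta> > 0 \<Longrightarrow> C \<eta> > 0" and Npos: "\<And>t. t \<in> I \<Longrightarrow> N t > 0"
    using ap unfolding almost_periodic_def by auto
  have tail: "(LINT \<xi>:{\<xi>. C \<eta> * N t \<le> norm \<xi>}|lborel. h t \<xi>) < \<eta>" if "\<eta> > 0" "t \<in> I" for \<eta> t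
  proof -
    have A: "(LINT x:{x. norm x \<ge> C \<eta> / N t}|lborel. (cmod (frac_grad s (u t) x))\<^sup>2) +
        (LINT \<xi>:{\<xi>. norm \<xi> \<ge> C \<eta> * N t}|lborel. norm \<xi> powr (2 * s) * (cmod (fhat (u t) \<xi>))\<^sup>2) < \<eta>"
      using conjunct2[OF conjunct2[OF ap[unfolded almost_periodic_def]], rule_format, OF that] unfolding s_def .
    have "0 \<le> (LINT x:{x. norm x \<ge> C \<eta> / N t}|lborel. (cmod (frac_grad s (u t) x))\<^sup>2)"
      unfolding set_lebesgue_integral_def by (intro Bochner_Integration.integral_nonneg) (simp add: indicator_def)
    then show ?thesis using A unfolding h_def by simp
  qed
  obtain K where K: "\<And>\<xi>. \<bar>\<phi> \<xi>\<bar> \<le> K"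
  proof -
    have "\<phi> differentiable (at x)" for x
      using \<phi>_smooth unfolding smooth_fun_def by (metis iter_dderiv.simps(1))
    then have "continuous_on UNIV \<phi>"
      by (simp add: continuous_at_imp_continuous_on differentiable_imp_continuous_within)
    then have "compact (\<phi> ` cball 0 (11/10))"
      by (rule compact_continuous_image[OF continuous_on_subset compact_cball]) simp
    then obtain K0 where K0: "\<And>y. y \<in> \<phi> ` cball 0 (11/10) \<Longrightarrow> norm y \<le> K0"
    proof -
      assume H: "\<And>K0. (\<And>y. y \<in> \<phi> ` cball 0 (11/10) \<Longrightarrow> norm y \<le> K0) \<Longrightarrow> thesis"
      have "bounded (\<phi> ` cball 0 (11/10))" using \<open>compact (\<phi> ` cball 0 (11/10))\<close> by (rule compact_imp_bounded)
      then obtain K0 where "\<forall>y\<in>\<phi> ` cball 0 (11/10). norm y \<le> K0" unfolding bounded_iff by blast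
      then show thesis using H by blast
    qed
    have "\<bar>\<phi> \<xi>\<bar> \<le> max K0 0" for \<xi>
    proof (cases "norm \<xi> > 11/10")
      case True then show ?thesis using \<phi>_supp by simp
    next
      case False then have "\<xi> \<in> cball 0 (11/10)" by simp
      then show ?thesis using K0[of "\<phi> \<xi>"] by auto
    qed
    then show ?thesis using that by blast
  qed
  have K0: "0 \<le> K" using K[of 0] by linarith
  define D where "D = (11/10::real) powr (2 * \<theta>)"
  have D0: "0 \<le> D" unfolding D_def by simp
  show "((\<lambda>M. (SUP t\<in>I. mult_norm (crit_reg TYPE('n) p) (\<lambda>\<xi>. 1 - \<phi> ((1 / M) *\<^sub>R \<xi>)) (u t))
              + (1 / M powr \<theta>) *
                (SUP t\<in>I. mult_norm (\<theta> + crit_reg TYPE('n) p) (\<lambda>\<xi>. \<phi> ((1 / M) *\<^sub>R \<xi>)) (u t)))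
            \<longlongrightarrow> 0) at_top"
    unfolding s_def[symmetric]
  proof (rule tendstoI)
    fix e :: real assume e: "e > 0"
    define L where "L = (1 + K) + K * sqrt (1 + D)"
    have L: "L > 0" unfolding L_def using K0 D0 by (simp add: add_pos_nonneg)
    define \<eta> where "\<eta> = (e / (2 * L))\<^sup>2"
    have \<eta>: "\<eta> > 0" unfolding \<eta>_def using e L by simp
    have s\<eta>: "sqrt \<eta> = e / (2 * L)" unfolding \<eta>_def using e L by simp
    define c where "c = C \<eta>"
    have c: "c > 0" unfolding c_def using Cpos[OF \<eta>] .
    have Z: "((\<lambda>M. (c / M) powr (2 * \<theta>)) \<longlongrightarrow> 0) at_top"
      by (rule tendsto_zero_powrI)
        (auto intro!: tendsto_divide_0[OF tendsto_const] filterlim_at_top_imp_at_infinity filterlim_ident eventually_mono[OF eventually_gt_at_top[of 0]]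
          simp: c \<theta> less_imp_le)
    have ev: "eventually (\<lambda>M. c \<le> M \<and> 0 < M \<and> (c / M) powr (2 * \<theta>) * B\<^sup>2 \<le> \<eta>) at_top"
    proof -
      have EV: "eventually (\<lambda>M. (c / M) powr (2 * \<theta>) < \<eta> / (B\<^sup>2 + 1)) at_top"
      proof (rule order_tendstoD(2)[OF Z])
        have "0 < B\<^sup>2 + 1" by (simp add: add_nonneg_pos)
        then show "0 < \<eta> / (B\<^sup>2 + 1)" using \<eta> by simp
      qed
      have IMP: "(c / M) powr (2 * \<theta>) * B\<^sup>2 \<le> \<eta>" if "(c / M) powr (2 * \<theta>) < \<eta> / (B\<^sup>2 + 1)" for M
      proof -
        have "(c / M) powr (2 * \<theta>) * B\<^sup>2 \<le> \<eta> / (B\<^sup>2 + 1) * B\<^sup>2"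
          using that by (intro mult_right_mono) auto
        also have "\<dots> \<le> \<eta>"
        proof -
          have p: "0 < B\<^sup>2 + 1" by (simp add: add_nonneg_pos)
          have "\<eta> * B\<^sup>2 \<le> \<eta> * (B\<^sup>2 + 1)" using \<eta> by simp
          then show ?thesis using p by (simp add: field_simps)
        qed
        finally show ?thesis .
      qed
      show ?thesis
        using EV eventually_ge_at_top[of c] eventually_gt_at_top[of 0]
        by eventually_elim (use IMP in auto)
    qed
    show "eventually (\<lambda>M. dist ((SUP t\<in>I. mult_norm s (\<lambda>\<xi>. 1 - \<phi> ((1 / M) *\<^sub>R \<xi>)) (u t))
              + (1 / M powr \<theta>) * (SUP t\<in>I. mult_norm (\<theta> + s) (\<lambda>\<xi>. \<phi> ((1 / M) *\<^sub>R \<xi>)) (u t))) 0 < e) at_top"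
      using ev
    proof (rule eventually_mono)
      fix M assume MM: "c \<le> M \<and> 0 < M \<and> (c / M) powr (2 * \<theta>) * B\<^sup>2 \<le> \<eta>"
      then have cM: "c \<le> M" and M: "0 < M" and cB: "(c / M) powr (2 * \<theta>) * B\<^sup>2 \<le> \<eta>" by auto
      have T1: "0 \<le> mult_norm s (\<lambda>\<xi>. 1 - \<phi> ((1 / M) *\<^sub>R \<xi>)) (u t) \<and>
          mult_norm s (\<lambda>\<xi>. 1 - \<phi> ((1 / M) *\<^sub>R \<xi>)) (u t) \<le> (1 + K) * sqrt \<eta>" if t: "t \<in> I" for t
      proof -
        have a: "0 < C \<eta> * N t" using Cpos[OF \<eta>] Npos[OF t] by simp
        have "C \<eta> * N t \<le> C \<eta> * 1" using N_le[OF t] Cpos[OF \<eta>] by (intro mult_left_mono) auto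
        then have aM: "C \<eta> * N t \<le> M" using cM unfolding c_def by simp
        have "(\<integral>\<xi>. norm \<xi> powr (2 * s) * (1 - \<phi> ((1 / M) *\<^sub>R \<xi>))\<^sup>2 * (cmod (fhat (u t) \<xi>))\<^sup>2 \<partial>lborel) \<le> (1 + K)\<^sup>2 * \<eta>"
          apply (rule est1[where \<phi> = \<phi> and K = K and a = "C \<eta> * N t"])
          using hi[OF t] K \<phi>_one a aM tail[OF \<eta> t] unfolding h_def by auto
        then have "mult_norm s (\<lambda>\<xi>. 1 - \<phi> ((1 / M) *\<^sub>R \<xi>)) (u t) \<le> sqrt ((1 + K)\<^sup>2 * \<eta>)"
          unfolding mult_norm_def by simp
        also have "\<dots> = (1 + K) * sqrt \<eta>" using K0 by (simp add: real_sqrt_mult)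
        finally show ?thesis unfolding mult_norm_def by simp
      qed
      define X where "X = K\<^sup>2 * ((c / M) powr (2 * \<theta>) * B\<^sup>2 + D * \<eta>)"
      have X0: "0 \<le> X" unfolding X_def using D0 \<eta> by simp
      have T2: "0 \<le> mult_norm (\<theta> + s) (\<lambda>\<xi>. \<phi> ((1 / M) *\<^sub>R \<xi>)) (u t) \<and>
          mult_norm (\<theta> + s) (\<lambda>\<xi>. \<phi> ((1 / M) *\<^sub>R \<xi>)) (u t) \<le> sqrt X * M powr \<theta>" if t: "t \<in> I" for t
      proof -
        have a: "0 < C \<eta> * N t" using Cpos[OF \<eta>] Npos[OF t] by simp
        have ac: "C \<eta> * N t \<le> c" using N_le[OF t] Cpos[OF \<eta>] unfolding c_def
        proof -
          have "C \<eta> * N t \<le> C \<eta> * 1" using N_le[OF t] Cpos[OF \<eta>] by (intro mult_left_mono) auto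
          then show "C \<eta> * N t \<le> C \<eta>" by simp
        qed
        define J where "J = (\<integral>\<xi>. norm \<xi> powr (2 * (\<theta> + s)) * (\<phi> ((1 / M) *\<^sub>R \<xi>))\<^sup>2 * (cmod (fhat (u t) \<xi>))\<^sup>2 \<partial>lborel)"
        have "(1 / M powr \<theta>)\<^sup>2 * J \<le> X"
          unfolding J_def X_def D_def
          apply (rule est2[where \<phi> = \<phi> and K = K and a = "C \<eta> * N t"])
          using hi[OF t] K \<phi>_supp a ac M \<theta> tail[OF \<eta> t] tot[OF t] unfolding h_def by auto
        then have "sqrt ((1 / M powr \<theta>)\<^sup>2 * J) \<le> sqrt X" by simp
        then have "(1 / M powr \<theta>) * sqrt J \<le> sqrt X" using M by (simp add: real_sqrt_mult)
        then have "sqrt J \<le> sqrt X * M powr \<theta>" using M by (simp add: field_simps)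
        then show ?thesis unfolding mult_norm_def J_def by simp
      qed
      have S1: "0 \<le> (SUP t\<in>I. mult_norm s (\<lambda>\<xi>. 1 - \<phi> ((1 / M) *\<^sub>R \<xi>)) (u t)) \<and>
          (SUP t\<in>I. mult_norm s (\<lambda>\<xi>. 1 - \<phi> ((1 / M) *\<^sub>R \<xi>)) (u t)) \<le> (1 + K) * sqrt \<eta>"
        by (rule sup_bound[OF Ine T1])
      have S2: "0 \<le> (SUP t\<in>I. mult_norm (\<theta> + s) (\<lambda>\<xi>. \<phi> ((1 / M) *\<^sub>R \<xi>)) (u t)) \<and>
          (SUP t\<in>I. mult_norm (\<theta> + s) (\<lambda>\<xi>. \<phi> ((1 / M) *\<^sub>R \<xi>)) (u t)) \<le> sqrt X * M powr \<theta>"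
        by (rule sup_bound[OF Ine T2])
      have m0: "0 < M powr \<theta>" using M by simp
      have S2': "0 \<le> (1 / M powr \<theta>) * (SUP t\<in>I. mult_norm (\<theta> + s) (\<lambda>\<xi>. \<phi> ((1 / M) *\<^sub>R \<xi>)) (u t)) \<and>
          (1 / M powr \<theta>) * (SUP t\<in>I. mult_norm (\<theta> + s) (\<lambda>\<xi>. \<phi> ((1 / M) *\<^sub>R \<xi>)) (u t)) \<le> sqrt X"
        using S2 m0 by (auto simp: field_simps)
      have "X \<le> K\<^sup>2 * (\<eta> + D * \<eta>)" unfolding X_def using cB K0 D0 by (intro mult_left_mono add_mono) auto
      then have "sqrt X \<le> sqrt (K\<^sup>2 * ((1 + D) * \<eta>))" by (simp add: algebra_simps)
      also have "\<dots> = K * sqrt (1 + D) * sqrt \<eta>" using K0 D0 by (simp add: real_sqrt_mult)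
      finally have sX: "sqrt X \<le> K * sqrt (1 + D) * sqrt \<eta>" .
      have "(1 + K) * sqrt \<eta> + K * sqrt (1 + D) * sqrt \<eta> = L * sqrt \<eta>" unfolding L_def by (simp add: algebra_simps)
      also have "\<dots> = e / 2" using s\<eta> L by simp
      finally have tot2: "(1 + K) * sqrt \<eta> + K * sqrt (1 + D) * sqrt \<eta> = e / 2" .
      show "dist ((SUP t\<in>I. mult_norm s (\<lambda>\<xi>. 1 - \<phi> ((1 / M) *\<^sub>R \<xi>)) (u t))
              + (1 / M powr \<theta>) * (SUP t\<in>I. mult_norm (\<theta> + s) (\<lambda>\<xi>. \<phi> ((1 / M) *\<^sub>R \<xi>)) (u t))) 0 < e"
        using S1 S2' sX tot2 e unfolding dist_real_def by linarith
    qed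
  qed
qed

end
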